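(* Let $r\in\mathbb{N}$ be fixed and let $\chi:\mathbb{R}_+\to\mathbb{R}$ be a kernel (in the sense described in the context). Then for every bounded, locally integrable function $f:\mathbb{R}_+\to\mathbb{R}$, $$\lim_{w\to\infty}\left(E_{w,r}^{\chi}f\right)(x)=f(x)$$ holds at every point $x\in\mathbb{R}_+$ at which $f$ is continuous. Furthermore, if $f\in\mathcal{C}(\mathbb{R}_+)$, then $$\lim_{w\to\infty}\left\|E_{w,r}^{\chi}f-f\right\|_\infty=0.$$
   Context: $\mathbb{R}_+=(0,\infty)$. A kernel is a continuous function $\chi:\mathbb{R}_+\to\mathbb{R}$ such that: (1) $\int_{\mathbb{R}_+}|\chi(x)|\frac{dx}{x}<\infty$ and $\chi$ is bounded on $[1/e,e]$; (2) $\sum_{k\in\mathbb{Z}}\chi(e^{-k}u)=1$ for every $u\in\mathbb{R}_+$, and $M_0(\chi):=\sup_{u\in\mathbb{R}_+}\sum_{k\in\mathbb{Z}}|\chi(e^{-k}u)|<+\infty$; (3) $\lim_{\gamma\to\infty}\sum_{|k-\log u|>\gamma}|\chi(e^{-k}u)|=0$ uniformly with respect to $u\in\mathbb{R}_+$. For $r\in\mathbb{N}$, $w>0$ and a locally integrable $f:\mathbb{R}_+\to\mathbb{R}$, the Mellin–Steklov exponential sampling operator of order $r$ is $$\left(E_{w,r}^{\chi}f\right)(x):=\sum_{k\in\mathbb{Z}}\chi(e^{-k}x^{w})\, w^{r}\int_1^{e^{1/w}}\!\!\cdots\!\int_1^{e^{1/w}}\sum_{m=1}^{r}(-1)^{1-m}\binom{r}{m}f\!\left(e^{k/w}(t_1\cdots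 t_r)^{m/r}\right)\frac{dt_1}{t_1}\cdots\frac{dt_r}{t_r},\quad x\in\mathbb{R}_+.$$ $CB(\mathbb{R}_+)$ is the space of bounded continuous functions on $\mathbb{R}_+$ with sup-norm $\|\cdot\|_\infty$. A function $f$ is log-uniformly continuous on $\mathbb{R}_+$ if for every $\varepsilon>0$ there is $\delta>0$ with $|f(u)-f(v)|<\varepsilon$ whenever $|\log u-\log v|\le\delta$, $u,v\in\mathbb{R}_+$. $\mathcal{C}(\mathbb{R}_+)$ denotes the subspace of $CB(\mathbb{R}_+)$ of log-uniformly continuous functions. *)

theory Defs
  imports "HOL-Analysis.Analysis"
begin

text \<open>Kernel (conditions (1)-(3) of the paper). Functions are of type real => real;
only their values on the positive reals matter.\<close>
definition is_kernel :: "(real \<Rightarrow> real) \<Rightarrow> bool" where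
  "is_kernel K \<longleftrightarrow>
     continuous_on {0<..} K
   \<and> set_integrable lborel {0<..} (\<lambda>x. K x / x)
   \<and> bounded (K ` {exp (-1)..exp 1})
   \<and> (\<forall>u>0. ((\<lambda>k::int. K (exp (- real_of_int k) * u)) has_sum 1) UNIV)
   \<and> (\<exists>M. \<forall>u>0. (\<lambda>k::int. \<bar>K (exp (- real_of_int k) * u)\<bar>) summable_on UNIV
                 \<and> infsum (\<lambda>k::int. \<bar>K (exp (- real_of_int k) * u)\<bar>) UNIV \<le> M)
   \<and> (\<forall>\<epsilon>>0. \<exists>\<gamma>0. \<forall>\<gamma>\<ge>\<gamma>0. \<forall>u>0.
         infsum (\<lambda>k::int. \<bar>K (exp (- real_of_int k) * u)\<bar>) {k::int. \<bar>real_of_int k - ln u\<bar> > \<gamma>} < \<epsilon>)"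

definition locally_integrable_pos :: "(real \<Rightarrow> real) \<Rightarrow> bool" where
  "locally_integrable_pos f \<longleftrightarrow> (\<forall>a b. 0 < a \<longrightarrow> a \<le> b \<longrightarrow> set_integrable lborel {a..b} f)"

definition bounded_pos :: "(real \<Rightarrow> real) \<Rightarrow> bool" where
  "bounded_pos f \<longleftrightarrow> (\<exists>M. \<forall>x>0. \<bar>f x\<bar> \<le> M)"

definition log_uniformly_continuous :: "(real \<Rightarrow> real) \<Rightarrow> bool" where
  "log_uniformly_continuous f \<longleftrightarrow>
     (\<forall>\<epsilon>>0. \<exists>\<delta>>0. \<forall>u>0. \<forall>v>0. \<bar>ln u - ln v\<bar> \<le> \<delta> \<longrightarrow> \<bar>f u - f v\<bar> < \<epsilon>)"

definition C_pos :: "(real \<Rightarrow> real) set" where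
  "C_pos = {f. bounded_pos f \<and> continuous_on {0<..} f \<and> log_uniformly_continuous f}"

definition steklov_mean :: "real \<Rightarrow> nat \<Rightarrow> (real \<Rightarrow> real) \<Rightarrow> int \<Rightarrow> real" where
  "steklov_mean w r f k =
     w ^ r * (\<integral>t \<in> PiE {..<r} (\<lambda>_. {1..exp (1 / w)}).
        (\<Sum>m = 1..r. (-1::real) powi (1 - int m) * real (r choose m) *
            f (exp (real_of_int k / w) * (\<Prod>i<r. t i) powr (real m / real r)))
        / (\<Prod>i<r. t i)
      \<partial>(PiM {..<r} (\<lambda>_. lborel)))"

definition mellin_steklov :: "real \<Rightarrow> nat \<Rightarrow> (real \<Rightarrow> real) \<Rightarrow> (real \<Rightarrow> real) \<Rightarrow> real \<Rightarrow> real" where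
  "mellin_steklov w r K f x =
     infsum (\<lambda>k::int. K (exp (- real_of_int k) * x powr w) * steklov_mean w r f k) UNIV"

end

theory Submission
  imports Defs
begin

lemma one_over_int:
  assumes "(w::real) > 0"
  shows "integrable lborel (\<lambda>s. indicator {1..exp (1/w)} s * (1/s))"
    and "integral\<^sup>L lborel (\<lambda>s. indicator {1..exp (1/w)} s * (1/s)) = 1/w"
proof -
  have le: "1 \<le> exp (1/w)" using assms by simp
  have c: "continuous_on {1..exp (1/w)} (\<lambda>s::real. 1/s)"
    by (intro continuous_intros) auto
  show "integrable lborel (\<lambda>s. indicator {1..exp (1/w)} s * (1/s))"
    using borel_integrable_atLeastAtMost'[OF c] unfolding set_integrable_def by simp
  have "integral\<^sup>L lborel (\<lambda>s. indicator {1..exp (1/w)} s *\<^sub>R (1/s)) = ln (exp (1/w)) - ln 1"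
    apply (rule integral_FTC_atLeastAtMost[OF le _ c])
    by (metis has_real_derivative_iff_has_vector_derivative DERIV_ln_divide has_field_derivative_at_within
          less_le_trans zero_less_one)
  then show "integral\<^sup>L lborel (\<lambda>s. indicator {1..exp (1/w)} s * (1/s)) = 1/w" by simp
qed

lemma prod_ind_eq:
  fixes t :: "nat \<Rightarrow> real"
  assumes "t \<in> extensional {..<r}"
  shows "indicator (PiE {..<r} (\<lambda>_. A)) t * (1 / (\<Prod>i<r. t i)) = (\<Prod>i<r. indicator A (t i) * (1 / t i))"
proof -
  have "(\<Prod>i<r. indicator A (t i) * (1 / t i)) = (\<Prod>i<r. indicator A (t i)) * (\<Prod>i<r. (1 / t i))"
    by (rule prod.distrib)
  also have "(\<Prod>i<r. (1 / t i)) = 1 / (\<Prod>i<r. t i)"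
    by (simp add: prod_dividef)
  also have "(\<Prod>i<r. indicator A (t i)::real) = indicator (PiE {..<r} (\<lambda>_. A)) t"
  proof (cases "t \<in> PiE {..<r} (\<lambda>_. A)")
    case True
    then show ?thesis by (auto simp: indicator_def PiE_iff intro!: prod.neutral)
  next
    case False
    then obtain i where "i < r" "t i \<notin> A" using assms by (auto simp: PiE_iff)
    then show ?thesis using False by (auto simp: indicator_def prod_zero_iff)
  qed
  finally show ?thesis by simp
qed

lemma box_int:
  assumes "(w::real) > 0"
  shows "integrable (PiM {..<r} (\<lambda>_. lborel)) (\<lambda>t. indicator (PiE {..<r} (\<lambda>_. {1..exp (1/w)})) t * (1 / (\<Prod>i<r. t i)))"
    and "integral\<^sup>L (PiM {..<r} (\<lambda>_. lborel)) (\<lambda>t. indicator (PiE {..<r} (\<lambda>_. {1..exp (1/w)})) t * (1 / (\<Prod>i<r. t i))) = (1/w)^r"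
proof -
  interpret product_sigma_finite "\<lambda>_::nat. lborel::real measure" by standard
  let ?g = "\<lambda>i::nat. \<lambda>s::real. indicator {1..exp (1/w)} s * (1/s)"
  have gi: "\<And>i. integrable lborel (?g i)" using one_over_int[OF assms] by simp
  have eq: "\<And>t. t \<in> space (PiM {..<r} (\<lambda>_. lborel)) \<Longrightarrow>
     indicator (PiE {..<r} (\<lambda>_. {1..exp (1/w)})) t * (1 / (\<Prod>i<r. t i)) = (\<Prod>i\<in>{..<r}. ?g i (t i))"
    by (rule prod_ind_eq) (auto simp: space_PiM PiE_def)
  have "integrable (PiM {..<r} (\<lambda>_. lborel)) (\<lambda>t. \<Prod>i\<in>{..<r}. ?g i (t i))"
    by (rule product_integrable_prod) (simp, rule gi)
  then show "integrable (PiM {..<r} (\<lambda>_. lborel)) (\<lambda>t. indicator (PiE {..<r} (\<lambda>_. {1..exp (1/w)})) t * (1 / (\<Prod>i<r. t i)))"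
    using Bochner_Integration.integrable_cong[OF refl, of "PiM {..<r} (\<lambda>_. lborel)" "\<lambda>t. indicator (PiE {..<r} (\<lambda>_. {1..exp (1/w)})) t * (1 / (\<Prod>i<r. t i))" "\<lambda>t. \<Prod>i\<in>{..<r}. ?g i (t i)"] eq by blast
  have "integral\<^sup>L (PiM {..<r} (\<lambda>_. lborel)) (\<lambda>t. \<Prod>i\<in>{..<r}. ?g i (t i)) = (\<Prod>i\<in>{..<r}. integral\<^sup>L lborel (?g i))"
    by (rule product_integral_prod) (simp, rule gi)
  also have "\<dots> = (1/w)^r" using one_over_int[OF assms] by simp
  finally show "integral\<^sup>L (PiM {..<r} (\<lambda>_. lborel)) (\<lambda>t. indicator (PiE {..<r} (\<lambda>_. {1..exp (1/w)})) t * (1 / (\<Prod>i<r. t i))) = (1/w)^r"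
    using Bochner_Integration.integral_cong[OF refl, of "PiM {..<r} (\<lambda>_. lborel)" "\<lambda>t. indicator (PiE {..<r} (\<lambda>_. {1..exp (1/w)})) t * (1 / (\<Prod>i<r. t i))" "\<lambda>t. \<Prod>i\<in>{..<r}. ?g i (t i)"] eq by simp
qed

definition cf :: "nat \<Rightarrow> nat \<Rightarrow> real" where
  "cf r m = (-1::real) powi (1 - int m) * real (r choose m)"

lemma neg1_powi: "(-1::real) powi (1 - int m) = - ((-1) ^ m)"
proof -
  have "(-1::real) powi (1 - int m) = (-1) powi 1 * (-1) powi (- int m)"
    by (subst power_int_add[symmetric]) auto
  also have "\<dots> = - inverse ((-1) ^ m)" by (simp add: power_int_minus)
  also have "inverse ((-1::real) ^ m) = (-1) ^ m"
    by (cases "even m") auto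
  finally show ?thesis .
qed

lemma cf_sum: assumes "r \<ge> 1" shows "(\<Sum>m=1..r. cf r m) = 1"
proof -
  have "(\<Sum>m\<le>r. (-1::real)^m * real (r choose m)) = 0"
    using choose_alternating_sum[of r] assms by simp
  moreover have "(\<Sum>m\<le>r. (-1::real)^m * real (r choose m)) = 1 + (\<Sum>m=1..r. (-1::real)^m * real (r choose m))"
    by (simp add: atMost_atLeast0 sum.atLeast_Suc_atMost)
  ultimately have "(\<Sum>m=1..r. (-1::real)^m * real (r choose m)) = -1" by linarith
  then show ?thesis unfolding cf_def neg1_powi by (simp add: sum_negf)
qed

lemma box_prod_bounds:
  assumes w: "w > 0" and t: "t \<in> PiE {..<r} (\<lambda>_. {1..exp (1/w)})"
  shows "1 \<le> (\<Prod>i<r. t i)" "(\<Prod>i<r. t i) \<le> exp (real r / w)"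
proof -
  show "1 \<le> (\<Prod>i<r. t i)" using t by (intro prod_ge_1) (auto simp: PiE_iff)
  have "(\<Prod>i<r. t i) \<le> (\<Prod>i<r. exp (1/w))"
  proof (intro prod_mono conjI)
    fix i assume "i \<in> {..<r}"
    then have "t i \<in> {1..exp (1/w)}" using t by (auto simp: PiE_iff)
    then show "0 \<le> t i" "t i \<le> exp (1/w)" by auto
  qed
  also have "\<dots> = exp (real r / w)" by (simp add: exp_of_nat_mult[symmetric])
  finally show "(\<Prod>i<r. t i) \<le> exp (real r / w)" .
qed

lemma point_bounds:
  assumes w: "w > 0" and t: "t \<in> PiE {..<r} (\<lambda>_. {1..exp (1/w)})" and m: "1 \<le> m" "m \<le> r"
  shows "exp (real_of_int k / w) \<le> exp (real_of_int k / w) * (\<Prod>i<r. t i) powr (real m / real r)"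
    "exp (real_of_int k / w) * (\<Prod>i<r. t i) powr (real m / real r) \<le> exp ((real_of_int k + real r) / w)"
proof -
  note b = box_prod_bounds[OF w t]
  have 1: "1 \<le> (\<Prod>i<r. t i) powr (real m / real r)" using b by (intro ge_one_powr_ge_zero) auto
  then show "exp (real_of_int k / w) \<le> exp (real_of_int k / w) * (\<Prod>i<r. t i) powr (real m / real r)"
    by simp
  have "(\<Prod>i<r. t i) powr (real m / real r) \<le> (\<Prod>i<r. t i) powr 1"
    using b m by (intro powr_mono) auto
  also have "\<dots> \<le> exp (real r / w)" using b by simp
  finally have "exp (real_of_int k / w) * (\<Prod>i<r. t i) powr (real m / real r) \<le> exp (real_of_int k / w) * exp (real r / w)"
    by simp
  also have "\<dots> = exp ((real_of_int k + real r) / w)" by (simp add: exp_add[symmetric] add_divide_distrib)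
  finally show "exp (real_of_int k / w) * (\<Prod>i<r. t i) powr (real m / real r) \<le> exp ((real_of_int k + real r) / w)" .
qed

lemma steklov_est:
  fixes f :: "real \<Rightarrow> real"
  assumes w: "w > 0" and r: "r \<ge> 1"
  and meas: "\<And>a b. 0 < a \<Longrightarrow> (\<lambda>y. indicator {a..b} y * f y) \<in> borel_measurable borel"
  and bnd: "\<And>y. exp (real_of_int k / w) \<le> y \<Longrightarrow> y \<le> exp ((real_of_int k + real r) / w) \<Longrightarrow> \<bar>f y - z\<bar> \<le> \<eta>"
  shows "\<bar>steklov_mean w r f k - z\<bar> \<le> (\<Sum>m=1..r. \<bar>cf r m\<bar>) * \<eta>"
proof -
  define B where "B = PiE {..<r} (\<lambda>_. {1..exp (1/w)})"
  define \<mu> where "\<mu> = PiM {..<r} (\<lambda>_. lborel::real measure)"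
  define a where "a = exp (real_of_int k / w)"
  define b where "b = exp ((real_of_int k + real r) / w)"
  define F where "F = (\<lambda>y. indicator {a..b} y * f y)"
  define C where "C = (\<Sum>m=1..r. \<bar>cf r m\<bar>)"
  define p where "p = (\<lambda>m (t::nat\<Rightarrow>real). a * (\<Prod>i<r. t i) powr (real m / real r))"
  define g where "g = (\<lambda>t. (\<Sum>m = 1..r. (-1::real) powi (1 - int m) * real (r choose m) *
            f (exp (real_of_int k / w) * (\<Prod>i<r. t i) powr (real m / real r))) / (\<Prod>i<r. t i))"
  define G where "G = (\<lambda>t. indicator B t *\<^sub>R g t)"
  define H where "H = (\<lambda>t. indicator B t * (1 / (\<Prod>i<r. t i)))"
  define D where "D = (\<lambda>t. G t - z * H t)"
  have \<eta>: "0 \<le> \<eta>" using bnd[of a] unfolding a_def b_def using w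
    by (smt (verit) abs_ge_zero divide_right_mono exp_le_cancel_iff of_nat_0_le_iff)
  have HI: "integrable \<mu> H" and HV: "integral\<^sup>L \<mu> H = (1/w)^r"
    using box_int[OF w, of r] unfolding H_def \<mu>_def B_def by auto
  have inB: "\<And>t m. t \<in> B \<Longrightarrow> 1 \<le> m \<Longrightarrow> m \<le> r \<Longrightarrow> a \<le> p m t \<and> p m t \<le> b"
    using point_bounds[OF w] unfolding B_def a_def b_def p_def by blast
  have Geq: "G t = indicator B t * ((\<Sum>m = 1..r. cf r m * F (p m t)) / (\<Prod>i<r. t i))" for t
  proof (cases "t \<in> B")
    case True
    then have "F (p m t) = f (p m t)" if "m \<in> {1..r}" for m using inB[of t m] that by (auto simp: F_def)
    then show ?thesis using True by (auto simp: G_def g_def cf_def p_def a_def intro!: sum.cong)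
  qed (simp add: G_def)
  have pm: "(\<lambda>t. F (p m t)) \<in> borel_measurable \<mu>" for m
  proof -
    have "F \<in> borel_measurable borel" unfolding F_def a_def by (rule meas) simp
    moreover have "(\<lambda>t. p m t) \<in> borel_measurable \<mu>" unfolding p_def \<mu>_def by measurable
    ultimately show ?thesis by measurable
  qed
  have Bs: "B \<in> sets \<mu>" unfolding B_def \<mu>_def by (intro sets_PiM_I_finite) auto
  have GM: "G \<in> borel_measurable \<mu>" unfolding Geq[abs_def] using pm Bs
    unfolding \<mu>_def by measurable
  have HM: "H \<in> borel_measurable \<mu>" using HI by auto
  have Dbound: "\<bar>D t\<bar> \<le> C * \<eta> * H t" for t
  proof (cases "t \<in> B")
    case True
    have P1: "1 \<le> (\<Prod>i<r. t i)" using box_prod_bounds[OF w, of t r] True B_def by auto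
    have "D t = ((\<Sum>m = 1..r. cf r m * F (p m t)) - z * (\<Sum>m=1..r. cf r m)) / (\<Prod>i<r. t i)"
      using True cf_sum[OF r] by (simp add: D_def Geq H_def diff_divide_distrib)
    also have "\<dots> = (\<Sum>m = 1..r. cf r m * (F (p m t) - z)) / (\<Prod>i<r. t i)"
      by (simp add: sum_distrib_left sum_subtractf algebra_simps)
    finally have De: "D t = (\<Sum>m = 1..r. cf r m * (F (p m t) - z)) / (\<Prod>i<r. t i)" .
    have "\<bar>\<Sum>m = 1..r. cf r m * (F (p m t) - z)\<bar> \<le> (\<Sum>m = 1..r. \<bar>cf r m * (F (p m t) - z)\<bar>)"
      by (rule sum_abs)
    also have "\<dots> \<le> (\<Sum>m = 1..r. \<bar>cf r m\<bar> * \<eta>)"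
    proof (intro sum_mono)
      fix m assume m: "m \<in> {1..r}"
      have "F (p m t) = f (p m t)" using inB[OF True, of m] m by (auto simp: F_def)
      moreover have "\<bar>f (p m t) - z\<bar> \<le> \<eta>" using inB[OF True, of m] m bnd unfolding a_def b_def by auto
      ultimately show "\<bar>cf r m * (F (p m t) - z)\<bar> \<le> \<bar>cf r m\<bar> * \<eta>"
        by (simp add: abs_mult mult_left_mono)
    qed
    also have "\<dots> = C * \<eta>" by (simp add: C_def sum_distrib_right)
    finally have "\<bar>\<Sum>m = 1..r. cf r m * (F (p m t) - z)\<bar> \<le> C * \<eta>" .
    then show ?thesis using P1 True unfolding De H_def
      by (simp add: abs_divide divide_right_mono)
  qed (simp add: D_def G_def H_def)
  have DI: "integrable \<mu> D"
  proof (rule Bochner_Integration.integrable_bound[of _ "\<lambda>t. C * \<eta> * H t"])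
    show "integrable \<mu> (\<lambda>t. C * \<eta> * H t)" using HI by simp
    show "D \<in> borel_measurable \<mu>" unfolding D_def using GM HM by measurable
    have "0 \<le> C * \<eta> * H t" for t using Dbound[of t] by linarith
    then show "AE x in \<mu>. norm (D x) \<le> norm (C * \<eta> * H x)" using Dbound by (auto intro!: AE_I2)
  qed
  have GI: "integrable \<mu> G" and Gv: "integral\<^sup>L \<mu> G = integral\<^sup>L \<mu> D + z * (1/w)^r"
  proof -
    have "G = (\<lambda>t. D t + z * H t)" by (simp add: D_def)
    moreover have "integrable \<mu> (\<lambda>t. D t + z * H t)" using DI HI by simp
    moreover have "integral\<^sup>L \<mu> (\<lambda>t. D t + z * H t) = integral\<^sup>L \<mu> D + z * (1/w)^r"
      using DI HI HV by simp
    ultimately show "integrable \<mu> G" "integral\<^sup>L \<mu> G = integral\<^sup>L \<mu> D + z * (1/w)^r" by auto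
  qed
  have sm: "steklov_mean w r f k = w^r * integral\<^sup>L \<mu> G"
    unfolding steklov_mean_def set_lebesgue_integral_def G_def g_def \<mu>_def B_def by simp
  have wr: "w^r * (1/w)^r = 1" using w by (simp add: power_one_over)
  have "steklov_mean w r f k - z = w^r * integral\<^sup>L \<mu> D"
    unfolding sm Gv using wr by (simp add: algebra_simps)
  also have "\<bar>\<dots>\<bar> \<le> w^r * (C * \<eta> * (1/w)^r)"
  proof -
    have "\<bar>integral\<^sup>L \<mu> D\<bar> \<le> integral\<^sup>L \<mu> (\<lambda>t. \<bar>D t\<bar>)"
      using integral_norm_bound[of \<mu> D] by simp
    also have "\<dots> \<le> integral\<^sup>L \<mu> (\<lambda>t. C * \<eta> * H t)"
      using DI HI Dbound by (intro integral_mono) auto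
    also have "\<dots> = C * \<eta> * (1/w)^r" using HV by simp
    finally show ?thesis using w by (simp add: abs_mult mult_left_mono)
  qed
  also have "\<dots> = C * \<eta>" using wr by (simp add: algebra_simps)
  finally show ?thesis unfolding C_def .
qed

lemma core:
  fixes f K :: "real \<Rightarrow> real"
  assumes hs: "((\<lambda>k::int. K (exp (- real_of_int k) * (x powr w))) has_sum 1) UNIV"
  and asum: "(\<lambda>k::int. \<bar>K (exp (- real_of_int k) * (x powr w))\<bar>) summable_on UNIV"
  and M0: "infsum (\<lambda>k::int. \<bar>K (exp (- real_of_int k) * (x powr w))\<bar>) UNIV \<le> M0"
  and r: "r \<ge> 1" and w: "w > 0" and x: "x > 0"
  and meas: "\<And>a b. 0 < a \<Longrightarrow> (\<lambda>y. indicator {a..b} y * f y) \<in> borel_measurable borel"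
  and fb: "\<And>y. y > 0 \<Longrightarrow> \<bar>f y\<bar> \<le> Mf"
  and cont: "\<And>y. y > 0 \<Longrightarrow> \<bar>ln y - ln x\<bar> \<le> \<delta> \<Longrightarrow> \<bar>f y - f x\<bar> \<le> \<epsilon>"
  and tail: "infsum (\<lambda>k::int. \<bar>K (exp (- real_of_int k) * (x powr w))\<bar>) {k::int. \<bar>real_of_int k - ln (x powr w)\<bar> > \<gamma>} \<le> \<epsilon>"
  and gd: "\<gamma> / w + real r / w \<le> \<delta>"
  and \<epsilon>: "\<epsilon> \<ge> 0"
  shows "\<bar>mellin_steklov w r K f x - f x\<bar> \<le> (\<Sum>m=1..r. \<bar>cf r m\<bar>) * \<epsilon> * M0 + \<epsilon> * (2 * (\<Sum>m=1..r. \<bar>cf r m\<bar>) * Mf)"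
proof -
  define C where "C = (\<Sum>m=1..r. \<bar>cf r m\<bar>)"
  define a where "a = (\<lambda>k::int. K (exp (- real_of_int k) * (x powr w)))"
  define s where "s = (\<lambda>k. steklov_mean w r f k)"
  define S where "S = {k::int. \<bar>real_of_int k - ln (x powr w)\<bar> > \<gamma>}"
  have C0: "C \<ge> 0" unfolding C_def by (intro sum_nonneg) auto
  have Mf0: "Mf \<ge> 0" using fb[OF x] by linarith
  have ipos: "\<And>k y. exp (real_of_int k / w) \<le> y \<Longrightarrow> y > 0"
    by (smt (verit) exp_gt_zero)
  have sb: "\<bar>s k\<bar> \<le> C * Mf" for k
    using steklov_est[OF w r meas, of k 0 Mf] fb ipos unfolding s_def C_def by force
  have sf: "\<bar>s k - f x\<bar> \<le> C * (2 * Mf)" for k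
  proof -
    have "\<bar>f y - f x\<bar> \<le> 2 * Mf" if "y > 0" for y using fb[OF that] fb[OF x] by linarith
    then show ?thesis using steklov_est[OF w r meas, of k "f x" "2 * Mf"] ipos unfolding s_def C_def by force
  qed
  have snear: "\<bar>s k - f x\<bar> \<le> C * \<epsilon>" if "k \<notin> S" for k
  proof -
    have lnu: "ln (x powr w) = w * ln x" using x by (simp add: ln_powr)
    have kk: "\<bar>real_of_int k - w * ln x\<bar> \<le> \<gamma>" using that lnu unfolding S_def by auto
    have "\<bar>f y - f x\<bar> \<le> \<epsilon>" if y1: "exp (real_of_int k / w) \<le> y" and y2: "y \<le> exp ((real_of_int k + real r) / w)" for y
    proof -
      have yp: "y > 0" using ipos[OF y1] .
      have l1: "real_of_int k / w \<le> ln y" using y1 yp by (metis ln_exp ln_le_cancel_iff exp_gt_zero)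
      have l2: "ln y \<le> (real_of_int k + real r) / w" using y2 yp by (metis ln_exp ln_le_cancel_iff exp_gt_zero)
      have "\<bar>real_of_int k / w - ln x\<bar> \<le> \<gamma> / w"
      proof -
        have "real_of_int k / w - ln x = (real_of_int k - w * ln x) / w" using w by (simp add: field_simps)
        then show ?thesis using kk w by (simp add: abs_divide divide_right_mono)
      qed
      moreover have "(real_of_int k + real r) / w = real_of_int k / w + real r / w" by (simp add: add_divide_distrib)
      ultimately have "\<bar>ln y - ln x\<bar> \<le> \<delta>" using l1 l2 gd by linarith
      then show ?thesis using cont[OF yp] by simp
    qed
    then show ?thesis using steklov_est[OF w r meas, of k "f x" \<epsilon>] unfolding s_def C_def by force
  qed
  have aabs: "(\<lambda>k. \<bar>a k\<bar>) summable_on UNIV" using asum unfolding a_def .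
  have ab: "(\<lambda>k. norm (a k)) summable_on UNIV" using aabs by simp
  have asm: "a summable_on UNIV" using abs_summable_summable[OF ab] .
  have ainf: "infsum a UNIV = 1" using hs unfolding a_def by (rule infsumI)
  let ?h = "\<lambda>k. a k * (s k - f x)"
  have hab: "(\<lambda>k. norm (?h k)) summable_on UNIV"
  proof (rule Infinite_Sum.abs_summable_on_comparison_test[of "\<lambda>k. \<bar>a k\<bar> * (C * (2 * Mf))"])
    show "(\<lambda>k. norm (\<bar>a k\<bar> * (C * (2 * Mf)))) summable_on UNIV"
      using summable_on_cmult_left[OF aabs, of "C * (2 * Mf)"] C0 Mf0 by (simp add: abs_mult)
    show "norm (?h k) \<le> norm (\<bar>a k\<bar> * (C * (2 * Mf)))" if "k \<in> UNIV" for k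
      using sf[of k] C0 Mf0 by (simp add: abs_mult mult_left_mono)
  qed
  have hsm: "?h summable_on UNIV" using abs_summable_summable[OF hab] .
  have afx: "(\<lambda>k. a k * f x) summable_on UNIV" using summable_on_cmult_left[OF asm] .
  have "mellin_steklov w r K f x = infsum (\<lambda>k. ?h k + a k * f x) UNIV"
    unfolding mellin_steklov_def a_def s_def by (simp add: algebra_simps)
  also have "\<dots> = infsum ?h UNIV + infsum (\<lambda>k. a k * f x) UNIV" using hsm afx by (rule infsum_add)
  also have "infsum (\<lambda>k. a k * f x) UNIV = f x" using infsum_cmult_left[of "f x" a UNIV] asm ainf by simp
  finally have diff: "mellin_steklov w r K f x - f x = infsum ?h UNIV" by simp
  define b where "b = (\<lambda>k. \<bar>a k\<bar> * (C * \<epsilon>) + (if k \<in> S then \<bar>a k\<bar> else 0) * (C * (2 * Mf)))"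
  have aS: "(\<lambda>k. \<bar>a k\<bar>) summable_on S" using summable_on_subset_banach[OF aabs] by simp
  have aSU: "(\<lambda>k. if k \<in> S then \<bar>a k\<bar> else 0) summable_on UNIV"
  proof -
    have "(\<lambda>k. if k \<in> S then \<bar>a k\<bar> else 0) summable_on UNIV \<longleftrightarrow> (\<lambda>k. \<bar>a k\<bar>) summable_on S"
      by (rule summable_on_cong_neutral) auto
    then show ?thesis using aS by simp
  qed
  have aSv: "infsum (\<lambda>k. if k \<in> S then \<bar>a k\<bar> else 0) UNIV = infsum (\<lambda>k. \<bar>a k\<bar>) S"
    by (rule infsum_cong_neutral) auto
  have bsm: "b summable_on UNIV" unfolding b_def
    by (intro summable_on_add summable_on_cmult_left aabs aSU)
  have "\<bar>infsum ?h UNIV\<bar> \<le> infsum (\<lambda>k. norm (?h k)) UNIV" using norm_infsum_bound[OF hab] by simp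
  also have "\<dots> \<le> infsum b UNIV"
  proof (rule infsum_mono)
    show "(\<lambda>k. norm (?h k)) summable_on UNIV" using hab by simp
    show "b summable_on UNIV" by (rule bsm)
    fix k :: int
    show "norm (?h k) \<le> b k"
    proof (cases "k \<in> S")
      case True
      have "\<bar>a k\<bar> * \<bar>s k - f x\<bar> \<le> \<bar>a k\<bar> * (C * (2 * Mf))" using sf[of k] by (simp add: mult_left_mono)
      moreover have "0 \<le> \<bar>a k\<bar> * (C * \<epsilon>)" using C0 \<epsilon> by simp
      ultimately show ?thesis using True by (simp add: b_def abs_mult)
    next
      case False
      then show ?thesis using snear[OF False] by (simp add: b_def abs_mult mult_left_mono)
    qed
  qed
  also have "infsum b UNIV = infsum (\<lambda>k. \<bar>a k\<bar>) UNIV * (C * \<epsilon>) + infsum (\<lambda>k. \<bar>a k\<bar>) S * (C * (2 * Mf))"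
    unfolding b_def
    by (subst infsum_add) (auto intro!: summable_on_cmult_left aabs aSU simp: infsum_cmult_left aabs aSU aSv)
  also have "\<dots> \<le> M0 * (C * \<epsilon>) + \<epsilon> * (C * (2 * Mf))"
  proof (intro add_mono mult_right_mono)
    show "infsum (\<lambda>k. \<bar>a k\<bar>) UNIV \<le> M0" using M0 unfolding a_def .
    show "infsum (\<lambda>k. \<bar>a k\<bar>) S \<le> \<epsilon>" using tail unfolding a_def S_def .
  qed (use C0 \<epsilon> Mf0 in auto)
  finally show ?thesis using diff unfolding C_def by (simp add: algebra_simps)
qed

lemma main_est:
  fixes f K :: "real \<Rightarrow> real"
  assumes K: "is_kernel K" and r: "r \<ge> 1"
  and meas: "\<And>a b. 0 < a \<Longrightarrow> (\<lambda>y. indicator {a..b} y * f y) \<in> borel_measurable borel"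
  and fb: "\<And>y. y > 0 \<Longrightarrow> \<bar>f y\<bar> \<le> Mf"
  and e: "e > 0"
  shows "\<exists>\<epsilon>>0. \<forall>\<delta>>0. \<exists>W. \<forall>w\<ge>W. \<forall>x>0. (\<forall>y>0. \<bar>ln y - ln x\<bar> \<le> \<delta> \<longrightarrow> \<bar>f y - f x\<bar> \<le> \<epsilon>)
            \<longrightarrow> \<bar>mellin_steklov w r K f x - f x\<bar> \<le> e / 2"
proof -
  have hs: "\<And>u. u > 0 \<Longrightarrow> ((\<lambda>k::int. K (exp (- real_of_int k) * u)) has_sum 1) UNIV"
    using K unfolding is_kernel_def by blast
  obtain M0 where M0: "\<And>u. u > 0 \<Longrightarrow> (\<lambda>k::int. \<bar>K (exp (- real_of_int k) * u)\<bar>) summable_on UNIV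
                 \<and> infsum (\<lambda>k::int. \<bar>K (exp (- real_of_int k) * u)\<bar>) UNIV \<le> M0"
    using K unfolding is_kernel_def by blast
  have tail: "\<forall>\<epsilon>>0. \<exists>\<gamma>0. \<forall>\<gamma>\<ge>\<gamma>0. \<forall>u>0.
         infsum (\<lambda>k::int. \<bar>K (exp (- real_of_int k) * u)\<bar>) {k::int. \<bar>real_of_int k - ln u\<bar> > \<gamma>} < \<epsilon>"
    using K unfolding is_kernel_def by blast
  define C where "C = (\<Sum>m=1..r. \<bar>cf r m\<bar>)"
  have C0: "C \<ge> 0" unfolding C_def by (intro sum_nonneg) auto
  have Mf0: "Mf \<ge> 0" using fb[of 1] by linarith
  define T where "T = C * \<bar>M0\<bar> + 2 * C * Mf + 1"
  have T: "T \<ge> 1" unfolding T_def using C0 Mf0 by simp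
  define \<epsilon> where "\<epsilon> = e / (2 * T)"
  have \<epsilon>: "\<epsilon> > 0" using e T unfolding \<epsilon>_def by simp
  have key: "C * \<epsilon> * M0 + \<epsilon> * (2 * C * Mf) \<le> e / 2"
  proof -
    have "C * \<epsilon> * M0 \<le> C * \<epsilon> * \<bar>M0\<bar>" using C0 \<epsilon> by (intro mult_left_mono) auto
    then have "C * \<epsilon> * M0 + \<epsilon> * (2 * C * Mf) \<le> \<epsilon> * T" unfolding T_def using \<epsilon> by (simp add: algebra_simps)
    also have "\<dots> = e / 2" unfolding \<epsilon>_def using T by simp
    finally show ?thesis .
  qed
  obtain \<gamma>0 where g0: "\<forall>\<gamma>\<ge>\<gamma>0. \<forall>u>0.
         infsum (\<lambda>k::int. \<bar>K (exp (- real_of_int k) * u)\<bar>) {k::int. \<bar>real_of_int k - ln u\<bar> > \<gamma>} < \<epsilon>"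
    using tail \<epsilon> by blast
  define \<gamma> where "\<gamma> = max \<gamma>0 0"
  show ?thesis
  proof (rule exI[of _ \<epsilon>], intro conjI allI impI \<epsilon>)
    fix \<delta> :: real assume \<delta>: "\<delta> > 0"
    define W where "W = max 1 ((\<gamma> + real r) / \<delta>)"
    show "\<exists>W. \<forall>w\<ge>W. \<forall>x>0. (\<forall>y>0. \<bar>ln y - ln x\<bar> \<le> \<delta> \<longrightarrow> \<bar>f y - f x\<bar> \<le> \<epsilon>)
            \<longrightarrow> \<bar>mellin_steklov w r K f x - f x\<bar> \<le> e / 2"
    proof (intro exI[of _ W] allI impI)
      fix w x :: real assume wW: "W \<le> w" and x: "x > 0"
        and cont: "\<forall>y>0. \<bar>ln y - ln x\<bar> \<le> \<delta> \<longrightarrow> \<bar>f y - f x\<bar> \<le> \<epsilon>"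
      have w: "w > 0" using wW unfolding W_def by linarith
      have u: "x powr w > 0" using x by simp
      have gd: "\<gamma> / w + real r / w \<le> \<delta>"
      proof -
        have "(\<gamma> + real r) / \<delta> \<le> w" using wW unfolding W_def by linarith
        then have "\<gamma> + real r \<le> w * \<delta>" using \<delta> by (simp add: divide_le_eq mult.commute)
        then have "(\<gamma> + real r) / w \<le> \<delta>" using w by (simp add: divide_le_eq mult.commute)
        then show ?thesis by (simp add: add_divide_distrib)
      qed
      have ct: "\<And>y. y > 0 \<Longrightarrow> \<bar>ln y - ln x\<bar> \<le> \<delta> \<Longrightarrow> \<bar>f y - f x\<bar> \<le> \<epsilon>" using cont by blast
      have "\<gamma> \<ge> \<gamma>0" unfolding \<gamma>_def by simp
      then have tl: "infsum (\<lambda>k::int. \<bar>K (exp (- real_of_int k) * (x powr w))\<bar>) {k::int. \<bar>real_of_int k - ln (x powr w)\<bar> > \<gamma>} \<le> \<epsilon>"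
        using g0 u by (meson less_imp_le)
      have "\<bar>mellin_steklov w r K f x - f x\<bar> \<le> C * \<epsilon> * M0 + \<epsilon> * (2 * C * Mf)"
        using core[OF hs[OF u] conjunct1[OF M0[OF u]] conjunct2[OF M0[OF u]] r w x meas fb ct tl gd] \<epsilon>
        unfolding C_def by (simp add: algebra_simps)
      then show "\<bar>mellin_steklov w r K f x - f x\<bar> \<le> e / 2" using key by linarith
    qed
  qed
qed

lemma li_meas:
  assumes "locally_integrable_pos f" "0 < a"
  shows "(\<lambda>y. indicator {a..b} y * f y) \<in> borel_measurable borel"
proof (cases "a \<le> b")
  case True
  then have "set_integrable lborel {a..b} f" using assms unfolding locally_integrable_pos_def by blast
  then have "(\<lambda>y. indicator {a..b} y *\<^sub>R f y) \<in> borel_measurable lborel"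
    unfolding set_integrable_def by blast
  then show ?thesis by simp
next
  case False
  then have "{a..b} = {}" by simp
  then show ?thesis by simp
qed

lemma Cpos_li:
  assumes "continuous_on {0<..} f"
  shows "locally_integrable_pos f"
  unfolding locally_integrable_pos_def
proof (intro allI impI)
  fix a b :: real assume "0 < a" "a \<le> b"
  then have "continuous_on {a..b} f" using \<open>0 < a\<close> by (intro continuous_on_subset[OF assms]) auto
  then show "set_integrable lborel {a..b} f" by (rule borel_integrable_atLeastAtMost')
qed

theorem theorem1:
  fixes K :: "real \<Rightarrow> real" and r :: nat
  assumes "is_kernel K" and "r \<ge> 1"
  shows "(\<forall>f x. bounded_pos f \<and> locally_integrable_pos f \<and> x > 0 \<and> isCont f x \<longrightarrow>
            ((\<lambda>w. mellin_steklov w r K f x) \<longlongrightarrow> f x) at_top)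
       \<and> (\<forall>f. f \<in> C_pos \<longrightarrow>
            ((\<lambda>w. SUP x\<in>{0<..}. \<bar>mellin_steklov w r K f x - f x\<bar>) \<longlongrightarrow> 0) at_top)"
proof (intro conjI allI impI)
  fix f :: "real \<Rightarrow> real" and x :: real
  assume A: "bounded_pos f \<and> locally_integrable_pos f \<and> x > 0 \<and> isCont f x"
  obtain Mf where fb: "\<And>y. y > 0 \<Longrightarrow> \<bar>f y\<bar> \<le> Mf" using A unfolding bounded_pos_def by blast
  have meas: "\<And>a b. 0 < a \<Longrightarrow> (\<lambda>y. indicator {a..b} y * f y) \<in> borel_measurable borel"
    using A li_meas by blast
  have x: "x > 0" using A by blast
  have ce: "isCont (\<lambda>u. f (exp u)) (ln x)"
    using A x by (intro isCont_o2[where f=exp and g=f]) (auto)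
  show "((\<lambda>w. mellin_steklov w r K f x) \<longlongrightarrow> f x) at_top"
  proof (rule tendstoI)
    fix e :: real assume e: "e > 0"
    obtain \<epsilon> where \<epsilon>: "\<epsilon> > 0" and H: "\<forall>\<delta>>0. \<exists>W. \<forall>w\<ge>W. \<forall>x>0. (\<forall>y>0. \<bar>ln y - ln x\<bar> \<le> \<delta> \<longrightarrow> \<bar>f y - f x\<bar> \<le> \<epsilon>)
            \<longrightarrow> \<bar>mellin_steklov w r K f x - f x\<bar> \<le> e / 2"
      using main_est[OF assms meas fb e] by blast
    obtain d where d: "d > 0" and dd: "\<And>u. \<bar>u - ln x\<bar> < d \<Longrightarrow> \<bar>f (exp u) - f (exp (ln x))\<bar> < \<epsilon>"
      using ce \<epsilon> unfolding continuous_at_eps_delta dist_real_def by blast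
    have cont: "\<forall>y>0. \<bar>ln y - ln x\<bar> \<le> d / 2 \<longrightarrow> \<bar>f y - f x\<bar> \<le> \<epsilon>"
    proof (intro allI impI)
      fix y :: real assume "y > 0" "\<bar>ln y - ln x\<bar> \<le> d/2" 
      moreover have "y > 0 \<Longrightarrow> \<bar>ln y - ln x\<bar> < d \<Longrightarrow> \<bar>f y - f x\<bar> < \<epsilon>" using dd[of "ln y"] x by simp
      ultimately show "\<bar>f y - f x\<bar> \<le> \<epsilon>" using d by fastforce
    qed
    obtain W where W: "\<forall>w\<ge>W. \<forall>x>0. (\<forall>y>0. \<bar>ln y - ln x\<bar> \<le> d/2 \<longrightarrow> \<bar>f y - f x\<bar> \<le> \<epsilon>)
            \<longrightarrow> \<bar>mellin_steklov w r K f x - f x\<bar> \<le> e / 2"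
      using H d by (meson half_gt_zero)
    show "\<forall>\<^sub>F w in at_top. dist (mellin_steklov w r K f x) (f x) < e"
      unfolding eventually_at_top_linorder
    proof (intro exI[of _ W] allI impI)
      fix w assume "w \<ge> W"
      then have "\<bar>mellin_steklov w r K f x - f x\<bar> \<le> e / 2" using W x cont by blast
      then show "dist (mellin_steklov w r K f x) (f x) < e" using e by (simp add: dist_real_def)
    qed
  qed
next
  fix f :: "real \<Rightarrow> real"
  assume "f \<in> C_pos"
  then have B: "bounded_pos f" and Cc: "continuous_on {0<..} f" and L: "log_uniformly_continuous f"
    unfolding C_pos_def by auto
  obtain Mf where fb: "\<And>y. y > 0 \<Longrightarrow> \<bar>f y\<bar> \<le> Mf" using B unfolding bounded_pos_def by blast
  have meas: "\<And>a b. 0 < a \<Longrightarrow> (\<lambda>y. indicator {a..b} y * f y) \<in> borel_measurable borel"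
    using Cpos_li[OF Cc] li_meas by blast
  show "((\<lambda>w. SUP x\<in>{0<..}. \<bar>mellin_steklov w r K f x - f x\<bar>) \<longlongrightarrow> 0) at_top"
  proof (rule tendstoI)
    fix e :: real assume e: "e > 0"
    obtain \<epsilon> where \<epsilon>: "\<epsilon> > 0" and H: "\<forall>\<delta>>0. \<exists>W. \<forall>w\<ge>W. \<forall>x>0. (\<forall>y>0. \<bar>ln y - ln x\<bar> \<le> \<delta> \<longrightarrow> \<bar>f y - f x\<bar> \<le> \<epsilon>)
            \<longrightarrow> \<bar>mellin_steklov w r K f x - f x\<bar> \<le> e / 2"
      using main_est[OF assms meas fb e] by blast
    obtain d where d: "d > 0" and dd: "\<forall>u>0. \<forall>v>0. \<bar>ln u - ln v\<bar> \<le> d \<longrightarrow> \<bar>f u - f v\<bar> < \<epsilon>"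
      using L \<epsilon> unfolding log_uniformly_continuous_def by blast
    obtain W where W: "\<forall>w\<ge>W. \<forall>x>0. (\<forall>y>0. \<bar>ln y - ln x\<bar> \<le> d \<longrightarrow> \<bar>f y - f x\<bar> \<le> \<epsilon>)
            \<longrightarrow> \<bar>mellin_steklov w r K f x - f x\<bar> \<le> e / 2"
      using H d by blast
    show "\<forall>\<^sub>F w in at_top. dist (SUP x\<in>{0<..}. \<bar>mellin_steklov w r K f x - f x\<bar>) 0 < e"
      unfolding eventually_at_top_linorder
    proof (intro exI[of _ W] allI impI)
      fix w assume wW: "w \<ge> W"
      have bx: "\<bar>mellin_steklov w r K f x - f x\<bar> \<le> e / 2" if "x > 0" for x
      proof -
        have "\<forall>y>0. \<bar>ln y - ln x\<bar> \<le> d \<longrightarrow> \<bar>f y - f x\<bar> \<le> \<epsilon>" using dd that by (meson less_imp_le)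
        then show ?thesis using W wW that by blast
      qed
      have le: "(SUP x\<in>{0<..}. \<bar>mellin_steklov w r K f x - f x\<bar>) \<le> e / 2"
        by (rule cSUP_least) (use bx in auto)
      have bdd: "bdd_above ((\<lambda>x. \<bar>mellin_steklov w r K f x - f x\<bar>) ` {0<..})"
        using bx by (intro bdd_aboveI[of _ "e/2"]) auto
      have ge: "0 \<le> (SUP x\<in>{0<..}. \<bar>mellin_steklov w r K f x - f x\<bar>)"
        using cSUP_upper[OF _ bdd, of 1] by (meson abs_ge_zero greaterThan_iff order_trans zero_less_one)
      show "dist (SUP x\<in>{0<..}. \<bar>mellin_steklov w r K f x - f x\<bar>) 0 < e"
        using le ge e by (simp add: dist_real_def)
    qed
  qed
qed
end
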